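(* Let $E,E'$ be finite sets with $|E'|=2$, $F:\mathcal P(E)\to\mathbb R$ twice continuously differentiable, $\alpha[b]\in\mathcal P(E)$ ($b\in E'$), $\pi\in\mathcal P(E')$ with $\pi(b)>0$ for all $b$, and assume the non-degeneracy conditions 1) and 2) (see context), with the set of minimizers $M^*$ satisfying $|M^*|\geq 2$. Then the set $M^{**}:=\{\hat\nu\in M^*: w_{\hat\nu}>0\}$ of visible pure phases has exactly two elements, and $w_{\hat\nu}=\tfrac12$ for both $\hat\nu\in M^{**}$.
   Context: Free energy $\Phi[\pi](\hat\nu)=F(\pi\cdot\hat\nu)+\sum_b\pi(b)S(\hat\nu(b)|\alpha[b])$ on $\mathcal P(E)^{E'}$, $\pi\cdot\hat\nu=\sum_b\pi(b)\hat\nu(b)$, $S(p|q)=\sum_ap(a)\log(p(a)/q(a))$. Non-degeneracy 1): $\Phi[\pi]$ has a finite set of minimizers $M^*$, each with positive definite Hessian. For $\hat\nu\in M^*$, the stability vector $B_{\hat\nu}\in T\mathcal P(E')=\{x\in\mathbb R^{E'}:\sum x=0\}$ is defined by $\langle x,B_{\hat\nu}\rangle=-(dF_{\pi\cdot\hat\nu}(\sum_bx(b)\hat\nu(b))+\sum_bx(b)S(\hat\nu(b)|\alpha[b]))$ for all $x\in T\mathcal P(E')$, where $dF_\nu$ is the differential of $F$ on $T\mathcal P(E)$. Non-degeneracy 2): distinct minimizers have distinct stability vectors. The weight of $\hat\nu\in M^*$ is $w_{\hat\nu}=\mathbb P(G\in R_{\hat\nu})$ with $R_{\hat\nu}=\{x\in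 T\mathcal P(E'):\langle x,B_{\hat\nu}\rangle>\max_{\hat\nu'\in M^*\setminus\{\hat\nu\}}\langle x,B_{\hat\nu'}\rangle\}$, and $G$ a centered Gaussian vector in $T\mathcal P(E')$ with covariance $C_\pi(b,b')=\pi(b)1_{b=b'}-\pi(b)\pi(b')$. (These are the weights appearing in the AW-metastate $\kappa[\eta]=\sum_{\hat\nu}w_{\hat\nu}\delta_{\mu_{\hat\nu}[\eta]}$ of the model with Gibbs measures $\mu_{F,n}[\eta](\omega)\propto e^{-nF(L_n^\omega)}\prod_i\alpha[\eta(i)](\omega(i))$, $\eta$ i.i.d. $\pi$.) *)

theory Defs
  imports "HOL-Probability.Probability"
begin

definition prob_simplex :: "(real ^ 'a::finite) set" where
  "prob_simplex = {p. (\<forall>a. 0 \<le> p $ a) \<and> (\<Sum>a\<in>UNIV. p $ a) = 1}"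

definition tangent_sp :: "(real ^ 'a::finite) set" where
  "tangent_sp = {x. (\<Sum>a\<in>UNIV. x $ a) = 0}"

definition C2_on :: "(real ^ 'a::finite) set \<Rightarrow> (real ^ 'a \<Rightarrow> real) \<Rightarrow> bool" where
  "C2_on U F \<longleftrightarrow> open U \<and>
     (\<exists>F' :: real ^ 'a \<Rightarrow> ((real ^ 'a) \<Rightarrow>\<^sub>L real).
      \<exists>F'' :: real ^ 'a \<Rightarrow> ((real ^ 'a) \<Rightarrow>\<^sub>L ((real ^ 'a) \<Rightarrow>\<^sub>L real)).
        (\<forall>x\<in>U. (F has_derivative blinfun_apply (F' x)) (at x)) \<and>
        (\<forall>x\<in>U. (F' has_derivative blinfun_apply (F'' x)) (at x)) \<and>
        continuous_on U F'')"

definition relent :: "real ^ 'a::finite \<Rightarrow> real ^ 'a \<Rightarrow> ereal" where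
  "relent p q = (if \<exists>a. p $ a > 0 \<and> q $ a = 0 then \<infinity>
     else ereal (\<Sum>a\<in>UNIV. if p $ a = 0 then 0 else p $ a * ln (p $ a / q $ a)))"

definition pidot :: "real ^ 'b::finite \<Rightarrow> real ^ 'a::finite ^ 'b \<Rightarrow> real ^ 'a" where
  "pidot \<pi> \<nu> = (\<Sum>b\<in>UNIV. \<pi> $ b *\<^sub>R \<nu> $ b)"

definition Phi :: "(real ^ 'a::finite \<Rightarrow> real) \<Rightarrow> real ^ 'a ^ 'b::finite \<Rightarrow> real ^ 'b
                   \<Rightarrow> real ^ 'a ^ 'b \<Rightarrow> ereal" where
  "Phi F \<alpha> \<pi> \<nu> = ereal (F (pidot \<pi> \<nu>)) + (\<Sum>b\<in>UNIV. ereal (\<pi> $ b) * relent (\<nu> $ b) (\<alpha> $ b))"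

definition Pspace :: "(real ^ 'a::finite ^ 'b::finite) set" where
  "Pspace = {\<nu>. \<forall>b. \<nu> $ b \<in> prob_simplex}"

definition minimizers :: "(real ^ 'a::finite \<Rightarrow> real) \<Rightarrow> real ^ 'a ^ 'b::finite \<Rightarrow> real ^ 'b
                   \<Rightarrow> (real ^ 'a ^ 'b) set" where
  "minimizers F \<alpha> \<pi> = {\<nu> \<in> Pspace. \<forall>\<nu>'\<in>Pspace. Phi F \<alpha> \<pi> \<nu> \<le> Phi F \<alpha> \<pi> \<nu>'}"

text \<open>Admissible tangent_sp directions of P(E)^{E'} at points where Phi is finite:
  each component has zero sum and vanishes where alpha[b] vanishes.\<close>
definition tangent_dirs :: "real ^ 'a::finite ^ 'b::finite \<Rightarrow> (real ^ 'a ^ 'b) set" where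
  "tangent_dirs \<alpha> = {y. \<forall>b. y $ b \<in> tangent_sp \<and> (\<forall>a. \<alpha> $ b $ a = 0 \<longrightarrow> y $ b $ a = 0)}"

text \<open>Positive definite Hessian of Phi at nu: for every nonzero tangent_sp direction y,
  t |-> Phi(nu + t y) is finite (and in P(E)^{E'}) near 0, twice differentiable at 0,
  with strictly positive second derivative y^T Hess y.\<close>
definition hess_pos_def ::
  "(real ^ 'a::finite \<Rightarrow> real) \<Rightarrow> real ^ 'a ^ 'b::finite \<Rightarrow> real ^ 'b \<Rightarrow> real ^ 'a ^ 'b \<Rightarrow> bool" where
  "hess_pos_def F \<alpha> \<pi> \<nu> \<longleftrightarrow>
    (\<forall>y\<in>tangent_dirs \<alpha>. y \<noteq> 0 \<longrightarrow>
      (\<forall>\<^sub>F t in nhds 0. \<nu> + t *\<^sub>R y \<in> Pspace \<and> \<bar>Phi F \<alpha> \<pi> (\<nu> + t *\<^sub>R y)\<bar> \<noteq> \<infinity>) \<and>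
      (\<exists>g h. (\<forall>\<^sub>F t in nhds 0.
                 ((\<lambda>s. real_of_ereal (Phi F \<alpha> \<pi> (\<nu> + s *\<^sub>R y))) has_real_derivative g t) (at t)) \<and>
             (g has_real_derivative h) (at 0) \<and> h > 0))"

definition stab_vec ::
  "(real ^ 'a::finite \<Rightarrow> real) \<Rightarrow> real ^ 'a ^ 'b::finite \<Rightarrow> real ^ 'b \<Rightarrow> real ^ 'a ^ 'b \<Rightarrow> real ^ 'b" where
  "stab_vec F \<alpha> \<pi> \<nu> = (THE B. B \<in> tangent_sp \<and>
     (\<forall>x\<in>tangent_sp. x \<bullet> B =
        - (frechet_derivative F (at (pidot \<pi> \<nu>)) (\<Sum>b\<in>UNIV. x $ b *\<^sub>R \<nu> $ b)
           + (\<Sum>b\<in>UNIV. x $ b * real_of_ereal (relent (\<nu> $ b) (\<alpha> $ b))))))"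

definition cov_pi :: "real ^ 'b::finite \<Rightarrow> 'b \<Rightarrow> 'b \<Rightarrow> real" where
  "cov_pi \<pi> b b' = \<pi> $ b * (if b = b' then 1 else 0) - \<pi> $ b * \<pi> $ b'"

definition centered_gaussian_law :: "(real ^ 'b::finite) measure \<Rightarrow> ('b \<Rightarrow> 'b \<Rightarrow> real) \<Rightarrow> bool" where
  "centered_gaussian_law M C \<longleftrightarrow> prob_space M \<and> sets M = sets borel \<and>
     (\<forall>u::real ^ 'b. (CLINT x|M. cis (u \<bullet> x)) =
        complex_of_real (exp (- (\<Sum>b\<in>UNIV. \<Sum>b'\<in>UNIV. u $ b * C b b' * u $ b') / 2)))"

definition region ::
  "(real ^ 'a::finite \<Rightarrow> real) \<Rightarrow> real ^ 'a ^ 'b::finite \<Rightarrow> real ^ 'b \<Rightarrow> real ^ 'a ^ 'b \<Rightarrow> (real ^ 'b) set" where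
  "region F \<alpha> \<pi> \<nu> = {x \<in> tangent_sp. \<forall>\<nu>'\<in>minimizers F \<alpha> \<pi> - {\<nu>}.
       x \<bullet> stab_vec F \<alpha> \<pi> \<nu> > x \<bullet> stab_vec F \<alpha> \<pi> \<nu>'}"

definition weight ::
  "(real ^ 'b::finite) measure \<Rightarrow> (real ^ 'a::finite \<Rightarrow> real) \<Rightarrow> real ^ 'a ^ 'b \<Rightarrow> real ^ 'b \<Rightarrow> real ^ 'a ^ 'b \<Rightarrow> real" where
  "weight M F \<alpha> \<pi> \<nu> = measure M (region F \<alpha> \<pi> \<nu>)"

end

theory Submission imports Defs begin

lemma char_lin:
  fixes M :: "(real ^ 'b::finite) measure" and w :: "real ^ 'b"
  assumes G: "centered_gaussian_law M C"
  shows "char (distr M borel (\<lambda>x. w \<bullet> x)) t =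
     complex_of_real (exp (- (t^2 * (\<Sum>b\<in>UNIV. \<Sum>b'\<in>UNIV. w $ b * C b b' * w $ b')) / 2))"
proof -
  have sM: "sets M = sets borel" and P: "prob_space M" using G unfolding centered_gaussian_law_def by auto
  have meas: "(\<lambda>x. w \<bullet> x) \<in> measurable M borel"
    unfolding measurable_cong_sets[OF sM refl] by (intro borel_measurable_continuous_onI continuous_intros)
  have "char (distr M borel (\<lambda>x. w \<bullet> x)) t = (CLINT x|M. iexp (t * (w \<bullet> x)))"
    unfolding char_def by (subst integral_distr[OF meas]) auto
  also have "\<dots> = (CLINT x|M. cis ((t *\<^sub>R w) \<bullet> x))"
    by (simp add: cis_conv_exp)
  also have "\<dots> = complex_of_real (exp (- (\<Sum>b\<in>UNIV. \<Sum>b'\<in>UNIV. (t *\<^sub>R w) $ b * C b b' * (t *\<^sub>R w) $ b') / 2))"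
    using G unfolding centered_gaussian_law_def by blast
  also have "(\<Sum>b\<in>UNIV. \<Sum>b'\<in>UNIV. (t *\<^sub>R w) $ b * C b b' * (t *\<^sub>R w) $ b') = t^2 * (\<Sum>b\<in>UNIV. \<Sum>b'\<in>UNIV. w $ b * C b b' * w $ b')"
    by (simp add: sum_distrib_left power2_eq_square algebra_simps)
  finally show ?thesis by simp
qed

lemma char_return0: "char (return borel 0) t = 1"
  unfolding char_def by (simp add: integral_return)

lemma gauss_tangent:
  fixes M :: "(real ^ 'b::finite) measure"
  assumes G: "centered_gaussian_law M (cov_pi \<pi>)" and pi: "\<pi> \<in> prob_simplex"
  shows "measure M tangent_sp = 1"
proof -
  have sM: "sets M = sets borel" and P: "prob_space M" using G unfolding centered_gaussian_law_def by auto
  interpret P: prob_space M by (rule P)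
  have spM: "space M = UNIV" using sets_eq_imp_space_eq[OF sM] by simp
  define w :: "real ^ 'b" where "w = (\<chi> b. 1)"
  have wx: "w \<bullet> x = (\<Sum>b\<in>UNIV. x $ b)" for x unfolding w_def inner_vec_def by simp
  have s1: "(\<Sum>b\<in>UNIV. \<pi> $ b) = 1" using pi unfolding prob_simplex_def by simp
  have CC: "(\<Sum>b\<in>UNIV. \<Sum>b'\<in>UNIV. w $ b * cov_pi \<pi> b b' * w $ b') = 0"
  proof -
    have "(\<Sum>b'\<in>UNIV. w $ b * cov_pi \<pi> b b' * w $ b') = 0" for b
    proof -
      have "(\<Sum>b'\<in>UNIV. w $ b * cov_pi \<pi> b b' * w $ b') = (\<Sum>b'\<in>UNIV. \<pi> $ b * (if b = b' then 1 else 0)) - (\<Sum>b'\<in>UNIV. \<pi> $ b * \<pi> $ b')"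
        unfolding w_def cov_pi_def by (simp add: sum_subtractf)
      also have "\<dots> = \<pi> $ b - \<pi> $ b * (\<Sum>b'\<in>UNIV. \<pi> $ b')"
        by (simp add: sum_distrib_left[symmetric])
      finally show ?thesis using s1 by simp
    qed
    then show ?thesis by simp
  qed
  have meas: "(\<lambda>x. w \<bullet> x) \<in> measurable M borel"
    unfolding measurable_cong_sets[OF sM refl] by (intro borel_measurable_continuous_onI continuous_intros)
  have "distr M borel (\<lambda>x. w \<bullet> x) = return borel 0"
  proof (rule Levy_uniqueness)
    show "real_distribution (distr M borel (\<lambda>x. w \<bullet> x))" using meas by simp
    show "real_distribution (return borel (0::real))"
      unfolding real_distribution_def real_distribution_axioms_def by (simp add: prob_space_return)
    show "char (distr M borel (\<lambda>x. w \<bullet> x)) = char (return borel 0)"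
      by (rule ext) (simp add: char_lin[OF G] CC char_return0)
  qed
  then have "measure (distr M borel (\<lambda>x. w \<bullet> x)) {0} = 1" by (simp add: measure_return)
  then have "measure M ((\<lambda>x. w \<bullet> x) -` {0} \<inter> space M) = 1"
    using meas by (simp add: measure_distr)
  moreover have "(\<lambda>x. w \<bullet> x) -` {0} \<inter> space M = tangent_sp"
    unfolding spM tangent_sp_def wx by auto
  ultimately show ?thesis by simp
qed

lemma std_normal_half: "measure std_normal_distribution {0<..} = 1/2"
  "measure std_normal_distribution {..<0} = 1/2"
proof -
  let ?N = std_normal_distribution
  interpret N: real_distribution ?N by (rule real_dist_normal_dist)
  have mu: "uminus \<in> measurable ?N borel" by simp
  have "distr ?N borel uminus = ?N"
  proof (rule Levy_uniqueness)
    show "real_distribution (distr ?N borel uminus)" using mu by simp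
    show "real_distribution ?N" by (rule real_dist_normal_dist)
    show "char (distr ?N borel uminus) = char ?N"
    proof
      fix t
      have "char (distr ?N borel uminus) t = char ?N (-t)"
        unfolding char_def by (subst integral_distr[OF mu]) auto
      then show "char (distr ?N borel uminus) t = char ?N t"
        by (simp add: char_std_normal_distribution)
    qed
  qed
  then have sym: "measure ?N {..<0} = measure ?N {0<..}"
    using measure_distr[OF mu, of "{..<0}"] by (auto simp: vimage_def greaterThan_def)
  have z: "emeasure ?N {0} = 0"
    by (simp add: emeasure_density nn_integral_null_set countable_imp_null_set_lborel)
  have "measure ?N {0<..} + measure ?N {..<0} + measure ?N {0} = measure ?N ({0<..} \<union> {..<0} \<union> {0})"
    by (subst N.finite_measure_Union; auto)+
  also have "{0<..} \<union> {..<0} \<union> {0::real} = UNIV" by auto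
  finally have "measure ?N {0<..} + measure ?N {..<0} + measure ?N {0} = 1" using N.prob_space by simp
  moreover have "measure ?N {0} = 0" using z by (simp add: measure_def)
  ultimately show "measure ?N {0<..} = 1/2" "measure ?N {..<0} = 1/2" using sym by auto
qed

lemma gauss_half:
  fixes M :: "(real ^ 'b::finite) measure"
  assumes G: "centered_gaussian_law M (cov_pi \<pi>)" and pi: "\<pi> \<in> prob_simplex"
    and U: "UNIV = {b1, b2}" and ne: "b1 \<noteq> b2" and p1: "\<pi> $ b1 > 0" and p2: "\<pi> $ b2 > 0"
  shows "measure M {x. x $ b1 > 0} = 1/2" "measure M {x. x $ b1 < 0} = 1/2"
proof -
  have sM: "sets M = sets borel" and P: "prob_space M" using G unfolding centered_gaussian_law_def by auto
  interpret P: prob_space M by (rule P)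
  have spM: "space M = UNIV" using sets_eq_imp_space_eq[OF sM] by simp
  define \<sigma> where "\<sigma> = sqrt (\<pi> $ b1 * \<pi> $ b2)"
  have sp: "\<sigma> > 0" unfolding \<sigma>_def using p1 p2 by simp
  have s2: "\<sigma>^2 = \<pi> $ b1 * \<pi> $ b2" unfolding \<sigma>_def using p1 p2 by simp
  have s1: "\<pi> $ b1 + \<pi> $ b2 = 1" using pi ne unfolding prob_simplex_def U by simp
  define w :: "real ^ 'b" where "w = (\<chi> b. if b = b1 then 1/\<sigma> else 0)"
  have wx: "w \<bullet> x = x $ b1 / \<sigma>" for x unfolding w_def inner_vec_def U using ne by simp
  have CC: "(\<Sum>b\<in>UNIV. \<Sum>b'\<in>UNIV. w $ b * cov_pi \<pi> b b' * w $ b') = 1"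
  proof -
    have "(\<Sum>b\<in>UNIV. \<Sum>b'\<in>UNIV. w $ b * cov_pi \<pi> b b' * w $ b') = cov_pi \<pi> b1 b1 / \<sigma>^2"
      unfolding w_def U using ne by (simp add: power2_eq_square)
    also have "cov_pi \<pi> b1 b1 = \<sigma>^2"
    proof -
      have "\<pi> $ b1 = 1 - \<pi> $ b2" using s1 by simp
      have "\<pi> $ b1 = \<pi> $ b1 * (\<pi> $ b1 + \<pi> $ b2)" using s1 by simp
      then show ?thesis unfolding cov_pi_def s2 by (simp add: algebra_simps)
    qed
    finally show ?thesis using sp by simp
  qed
  have meas: "(\<lambda>x. w \<bullet> x) \<in> measurable M borel"
    unfolding measurable_cong_sets[OF sM refl] by (intro borel_measurable_continuous_onI continuous_intros)
  have D: "distr M borel (\<lambda>x. w \<bullet> x) = std_normal_distribution"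
  proof (rule Levy_uniqueness)
    show "real_distribution (distr M borel (\<lambda>x. w \<bullet> x))" using meas by simp
    show "real_distribution std_normal_distribution" by (rule real_dist_normal_dist)
    show "char (distr M borel (\<lambda>x. w \<bullet> x)) = char std_normal_distribution"
      by (rule ext) (simp add: char_lin[OF G] CC char_std_normal_distribution)
  qed
  have "measure M {x. x $ b1 > 0} = measure M ((\<lambda>x. w \<bullet> x) -` {0<..} \<inter> space M)"
    unfolding spM wx using sp by (simp add: vimage_def zero_less_divide_iff)
  also have "\<dots> = measure std_normal_distribution {0<..}"
    using measure_distr[OF meas, of "{0<..}"] measure_distr[OF meas, of "{..<0}"] D by simp
  finally show "measure M {x. x $ b1 > 0} = 1/2" using std_normal_half by simp
  have "measure M {x. x $ b1 < 0} = measure M ((\<lambda>x. w \<bullet> x) -` {..<0} \<inter> space M)"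
    unfolding spM wx using sp by (simp add: vimage_def divide_less_0_iff)
  also have "\<dots> = measure std_normal_distribution {..<0}"
    using measure_distr[OF meas, of "{0<..}"] measure_distr[OF meas, of "{..<0}"] D by simp
  finally show "measure M {x. x $ b1 < 0} = 1/2" using std_normal_half by simp
qed

lemma pidot_simplex:
  assumes pi: "\<pi> \<in> prob_simplex" and nu: "\<nu> \<in> Pspace"
  shows "pidot \<pi> \<nu> \<in> prob_simplex"
proof -
  have nn: "\<forall>a. 0 \<le> \<nu> $ b $ a" and s: "(\<Sum>a\<in>UNIV. \<nu> $ b $ a) = 1" for b
    using nu unfolding Pspace_def prob_simplex_def by auto
  have pn: "\<forall>b. 0 \<le> \<pi> $ b" and ps: "(\<Sum>b\<in>UNIV. \<pi> $ b) = 1" using pi unfolding prob_simplex_def by auto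
  have "(\<Sum>a\<in>UNIV. \<Sum>b\<in>UNIV. \<pi> $ b * \<nu> $ b $ a) = (\<Sum>b\<in>UNIV. \<pi> $ b * (\<Sum>a\<in>UNIV. \<nu> $ b $ a))"
    by (subst sum.swap) (simp add: sum_distrib_left)
  also have "\<dots> = 1" using s ps by simp
  finally show ?thesis unfolding prob_simplex_def pidot_def
    using pn nn by (auto intro!: sum_nonneg)
qed

lemma stab_tangent:
  fixes F :: "real ^ 'a::finite \<Rightarrow> real" and \<alpha> :: "real ^ 'a ^ 'b::finite"
  assumes F_C2: "\<exists>U. prob_simplex \<subseteq> U \<and> C2_on U F"
    and pi: "\<pi> \<in> prob_simplex" and nu: "\<nu> \<in> Pspace"
  shows "stab_vec F \<alpha> \<pi> \<nu> \<in> tangent_sp"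
proof -
  obtain U F' where sub: "prob_simplex \<subseteq> U" and der: "\<forall>x\<in>U. (F has_derivative blinfun_apply (F' x)) (at x)"
    using F_C2 unfolding C2_on_def by blast
  define p where "p = pidot \<pi> \<nu>"
  have "p \<in> U" using pidot_simplex[OF pi nu] sub unfolding p_def by auto
  then have fd: "frechet_derivative F (at p) = blinfun_apply (F' p)"
    using der frechet_derivative_at by metis
  define k where "k b = blinfun_apply (F' p) (\<nu> $ b) + real_of_ereal (relent (\<nu> $ b) (\<alpha> $ b))" for b
  have R: "frechet_derivative F (at (pidot \<pi> \<nu>)) (\<Sum>b\<in>UNIV. x $ b *\<^sub>R \<nu> $ b)
           + (\<Sum>b\<in>UNIV. x $ b * real_of_ereal (relent (\<nu> $ b) (\<alpha> $ b))) = (\<Sum>b\<in>UNIV. x $ b * k b)" for x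
    unfolding fd[unfolded p_def] k_def
    by (simp add: blinfun.sum_right blinfun.scaleR_right sum.distrib distrib_left p_def)
  define P where "P B \<longleftrightarrow> B \<in> tangent_sp \<and> (\<forall>x\<in>tangent_sp. x \<bullet> B =
        - (frechet_derivative F (at (pidot \<pi> \<nu>)) (\<Sum>b\<in>UNIV. x $ b *\<^sub>R \<nu> $ b)
           + (\<Sum>b\<in>UNIV. x $ b * real_of_ereal (relent (\<nu> $ b) (\<alpha> $ b)))))" for B
  define B0 :: "real ^ 'b" where "B0 = (\<chi> b. (\<Sum>c\<in>UNIV. k c) / real CARD('b) - k b)"
  have PB0: "P B0"
    unfolding P_def R
  proof (intro conjI ballI)
    show "B0 \<in> tangent_sp" unfolding tangent_sp_def B0_def
      by (simp add: sum_subtractf)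
    fix x :: "real ^ 'b" assume "x \<in> tangent_sp"
    then have x0: "(\<Sum>b\<in>UNIV. x $ b) = 0" unfolding tangent_sp_def by simp
    have "x \<bullet> B0 = (\<Sum>b\<in>UNIV. x $ b) * ((\<Sum>c\<in>UNIV. k c) / real CARD('b)) - (\<Sum>b\<in>UNIV. x $ b * k b)"
      unfolding B0_def inner_vec_def by (simp add: right_diff_distrib sum_subtractf sum_distrib_right sum_divide_distrib)
    then show "x \<bullet> B0 = - (\<Sum>b\<in>UNIV. x $ b * k b)" using x0 by simp
  qed
  have uniq: "B = B0" if "P B" for B
  proof -
    have tB: "B \<in> tangent_sp" and tB0: "B0 \<in> tangent_sp" using that PB0 unfolding P_def by auto
    have d: "B - B0 \<in> tangent_sp" using tB tB0 unfolding tangent_sp_def by (simp add: sum_subtractf)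
    have eB: "\<forall>x\<in>tangent_sp. x \<bullet> B = - (\<Sum>b\<in>UNIV. x $ b * k b)" using that unfolding P_def R by blast
    have eB0: "\<forall>x\<in>tangent_sp. x \<bullet> B0 = - (\<Sum>b\<in>UNIV. x $ b * k b)" using PB0 unfolding P_def R by blast
    have "(B - B0) \<bullet> B = (B - B0) \<bullet> B0" using eB[rule_format, OF d] eB0[rule_format, OF d] by simp
    then have "(B - B0) \<bullet> (B - B0) = 0" by (simp add: inner_diff_right)
    then show ?thesis by simp
  qed
  have "stab_vec F \<alpha> \<pi> \<nu> = B0"
    unfolding stab_vec_def P_def[symmetric] using PB0 uniq by (rule the_equality)
  then show ?thesis using PB0 unfolding P_def by simp
qed

lemma gauss_half_tangent:
  fixes M :: "(real ^ 'b::finite) measure"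
  assumes G: "centered_gaussian_law M (cov_pi \<pi>)" and pi: "\<pi> \<in> prob_simplex"
    and U: "UNIV = {b1, b2}" and ne: "b1 \<noteq> b2" and p1: "\<pi> $ b1 > 0" and p2: "\<pi> $ b2 > 0"
  shows "measure M {x \<in> tangent_sp. x $ b1 > 0} = 1/2" "measure M {x \<in> tangent_sp. x $ b1 < 0} = 1/2"
proof -
  have sM: "sets M = sets borel" and P: "prob_space M" using G unfolding centered_gaussian_law_def by auto
  interpret P: prob_space M by (rule P)
  have AE: "AE x in M. x \<in> tangent_sp" using P.AE_prob_1 gauss_tangent[OF G pi] by blast
  have T: "tangent_sp \<in> sets M" unfolding sM tangent_sp_def
    by (intro borel_closed closed_Collect_eq continuous_intros)
  have A: "{x::real^'b. x $ b1 > 0} \<in> sets M" "{x::real^'b. x $ b1 < 0} \<in> sets M" unfolding sM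
    by (intro borel_open open_Collect_less continuous_intros)+
  have I: "{x \<in> tangent_sp. x $ b1 > 0} \<in> sets M" "{x \<in> tangent_sp. x $ b1 < 0} \<in> sets M"
    using sets.Int[OF T A(1)] sets.Int[OF T A(2)] by (simp_all add: Int_def)
  have "measure M {x \<in> tangent_sp. x $ b1 > 0} = measure M {x. x $ b1 > 0}"
    by (rule measure_eq_AE) (use AE T A I in auto)
  then show "measure M {x \<in> tangent_sp. x $ b1 > 0} = 1/2" using gauss_half[OF assms] by simp
  have "measure M {x \<in> tangent_sp. x $ b1 < 0} = measure M {x. x $ b1 < 0}"
    by (rule measure_eq_AE) (use AE T A I in auto)
  then show "measure M {x \<in> tangent_sp. x $ b1 < 0} = 1/2" using gauss_half[OF assms] by simp
qed

theorem mainTheorem4: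
  fixes F :: "real ^ 'a::finite \<Rightarrow> real"
    and \<alpha> :: "real ^ 'a ^ 'b::finite"
    and \<pi> :: "real ^ 'b"
    and M :: "(real ^ 'b) measure"
  assumes card2: "CARD('b) = 2"
    and F_C2: "\<exists>U. prob_simplex \<subseteq> U \<and> C2_on U F"
    and alpha: "\<forall>b. \<alpha> $ b \<in> prob_simplex"
    and pi: "\<pi> \<in> prob_simplex" "\<forall>b. \<pi> $ b > 0"
    and nondeg1: "finite (minimizers F \<alpha> \<pi>)" "\<forall>\<nu>\<in>minimizers F \<alpha> \<pi>. hess_pos_def F \<alpha> \<pi> \<nu>"
    and nondeg2: "inj_on (stab_vec F \<alpha> \<pi>) (minimizers F \<alpha> \<pi>)"
    and two: "card (minimizers F \<alpha> \<pi>) \<ge> 2"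
    and G: "centered_gaussian_law M (cov_pi \<pi>)"
  shows "card {\<nu> \<in> minimizers F \<alpha> \<pi>. weight M F \<alpha> \<pi> \<nu> > 0} = 2 \<and>
         (\<forall>\<nu>\<in>{\<nu> \<in> minimizers F \<alpha> \<pi>. weight M F \<alpha> \<pi> \<nu> > 0}. weight M F \<alpha> \<pi> \<nu> = 1/2)"
proof -
  obtain b1 b2 :: 'b where U: "UNIV = {b1, b2}" and ne: "b1 \<noteq> b2"
    using card2 unfolding card_2_iff by blast
  define Mn where "Mn = minimizers F \<alpha> \<pi>"
  define s where "s = stab_vec F \<alpha> \<pi>"
  define c where "c \<nu> = s \<nu> $ b1" for \<nu>
  have MnP: "Mn \<subseteq> Pspace" unfolding Mn_def minimizers_def by auto
  have sT: "s \<nu> \<in> tangent_sp" if "\<nu> \<in> Mn" for \<nu>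
    unfolding s_def using stab_tangent[OF F_C2 pi(1)] MnP that by auto
  have s2: "s \<nu> $ b2 = - c \<nu>" if "\<nu> \<in> Mn" for \<nu>
    using sT[OF that] ne unfolding tangent_sp_def U c_def by simp
  have inner: "x \<bullet> s \<nu> = 2 * (x $ b1) * c \<nu>" if "\<nu> \<in> Mn" "x \<in> tangent_sp" for \<nu> x
  proof -
    have "x $ b2 = - x $ b1" using that(2) ne unfolding tangent_sp_def U by simp
    then show ?thesis unfolding inner_vec_def U using ne s2[OF that(1)] by (simp add: c_def)
  qed
  have cinj: "inj_on c Mn"
  proof (rule inj_onI)
    fix \<nu> \<nu>' assume h: "\<nu> \<in> Mn" "\<nu>' \<in> Mn" "c \<nu> = c \<nu>'"
    have "s \<nu> = s \<nu>'"
      unfolding vec_eq_iff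
    proof
      fix i
      have "i = b1 \<or> i = b2" using U by (metis UNIV_I insertE singletonD)
      then show "s \<nu> $ i = s \<nu>' $ i"
        using h s2[OF h(1)] s2[OF h(2)] unfolding c_def by auto
    qed
    then show "\<nu> = \<nu>'" using nondeg2 h unfolding inj_on_def s_def Mn_def by blast
  qed
  have fin: "finite Mn" using nondeg1(1) unfolding Mn_def .
  have cardc: "card (c ` Mn) \<ge> 2" using card_image[OF cinj] two unfolding Mn_def by simp
  have ne2: "c ` Mn \<noteq> {}" using cardc by auto
  define cM where "cM = Max (c ` Mn)"
  define cm where "cm = Min (c ` Mn)"
  obtain \<nu>M where \<nu>M: "\<nu>M \<in> Mn" "c \<nu>M = cM" using Max_in[OF finite_imageI[OF fin] ne2] unfolding cM_def by auto
  obtain \<nu>m where \<nu>m: "\<nu>m \<in> Mn" "c \<nu>m = cm" using Min_in[OF finite_imageI[OF fin] ne2] unfolding cm_def by auto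
  have leM: "c \<nu> \<le> cM" if "\<nu> \<in> Mn" for \<nu> unfolding cM_def using fin that by auto
  have gem: "cm \<le> c \<nu>" if "\<nu> \<in> Mn" for \<nu> unfolding cm_def using fin that by auto
  have ltM: "c \<nu> < cM" if "\<nu> \<in> Mn" "\<nu> \<noteq> \<nu>M" for \<nu>
    using leM[OF that(1)] cinj \<nu>M that unfolding inj_on_def by force
  have gtm: "cm < c \<nu>" if "\<nu> \<in> Mn" "\<nu> \<noteq> \<nu>m" for \<nu>
    using gem[OF that(1)] cinj \<nu>m that unfolding inj_on_def by force
  have Mm: "\<nu>M \<noteq> \<nu>m"
  proof
    assume eq: "\<nu>M = \<nu>m"
    have "c ` Mn \<subseteq> {cM}"
      using leM gem \<nu>M \<nu>m eq by fastforce
    then have "card (c ` Mn) \<le> 1" using card_mono[of "{cM}" "c ` Mn"] by simp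
    then show False using cardc by simp
  qed
  have cmM: "cm < cM" using ltM[OF \<nu>m(1)] Mm \<nu>m by auto
  have regM: "region F \<alpha> \<pi> \<nu>M = {x \<in> tangent_sp. x $ b1 > 0}"
  proof -
    have "(\<forall>\<nu>'\<in>Mn - {\<nu>M}. x \<bullet> s \<nu>M > x \<bullet> s \<nu>') \<longleftrightarrow> x $ b1 > 0" if x: "x \<in> tangent_sp" for x
    proof
      assume "\<forall>\<nu>'\<in>Mn - {\<nu>M}. x \<bullet> s \<nu>M > x \<bullet> s \<nu>'"
      then have "x \<bullet> s \<nu>M > x \<bullet> s \<nu>m" using \<nu>m Mm by auto
      then have "2 * x $ b1 * cM > 2 * x $ b1 * cm" using inner x \<nu>m \<nu>M by simp
      then have "x $ b1 * (cM - cm) > 0" by (simp add: algebra_simps)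
      then show "x $ b1 > 0" using cmM by (simp add: zero_less_mult_iff)
    next
      assume "x $ b1 > 0"
      then show "\<forall>\<nu>'\<in>Mn - {\<nu>M}. x \<bullet> s \<nu>M > x \<bullet> s \<nu>'"
        using inner x \<nu>M ltM by auto
    qed
    then show ?thesis unfolding region_def Mn_def[symmetric] s_def[symmetric] by auto
  qed
  have regm: "region F \<alpha> \<pi> \<nu>m = {x \<in> tangent_sp. x $ b1 < 0}"
  proof -
    have "(\<forall>\<nu>'\<in>Mn - {\<nu>m}. x \<bullet> s \<nu>m > x \<bullet> s \<nu>') \<longleftrightarrow> x $ b1 < 0" if x: "x \<in> tangent_sp" for x
    proof
      assume "\<forall>\<nu>'\<in>Mn - {\<nu>m}. x \<bullet> s \<nu>m > x \<bullet> s \<nu>'"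
      then have "x \<bullet> s \<nu>m > x \<bullet> s \<nu>M" using \<nu>M Mm by auto
      then have "2 * x $ b1 * cm > 2 * x $ b1 * cM" using inner x \<nu>m \<nu>M by simp
      then have "x $ b1 * (cM - cm) < 0" by (simp add: algebra_simps)
      then show "x $ b1 < 0" using cmM by (simp add: mult_less_0_iff)
    next
      assume "x $ b1 < 0"
      then show "\<forall>\<nu>'\<in>Mn - {\<nu>m}. x \<bullet> s \<nu>m > x \<bullet> s \<nu>'"
        using inner x \<nu>m gtm by (auto simp: mult_less_cancel_left_neg)
    qed
    then show ?thesis unfolding region_def Mn_def[symmetric] s_def[symmetric] by auto
  qed
 have regO: "region F \<alpha> \<pi> \<nu> = {}" if nu: "\<nu> \<in> Mn" "\<nu> \<noteq> \<nu>M" "\<nu> \<noteq> \<nu>m" for \<nu>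
  proof -
    have "\<not> (\<forall>\<nu>'\<in>Mn - {\<nu>}. x \<bullet> s \<nu> > x \<bullet> s \<nu>')" if x: "x \<in> tangent_sp" for x
    proof
      assume h: "\<forall>\<nu>'\<in>Mn - {\<nu>}. x \<bullet> s \<nu> > x \<bullet> s \<nu>'"
      have "x \<bullet> s \<nu> > x \<bullet> s \<nu>M" "x \<bullet> s \<nu> > x \<bullet> s \<nu>m" using h \<nu>M \<nu>m \<open>\<nu> \<noteq> \<nu>M\<close> \<open>\<nu> \<noteq> \<nu>m\<close> by auto
      then have "2 * x $ b1 * c \<nu> > 2 * x $ b1 * cM" "2 * x $ b1 * c \<nu> > 2 * x $ b1 * cm"
        using inner x \<nu>m \<nu>M \<open>\<nu> \<in> Mn\<close> by auto
      then have "x $ b1 * (cM - c \<nu>) < 0" "x $ b1 * (c \<nu> - cm) > 0" by (simp_all add: algebra_simps)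
      moreover have "cM - c \<nu> > 0" "c \<nu> - cm > 0" using ltM gtm nu by auto
      ultimately show False by (simp add: mult_less_0_iff zero_less_mult_iff)
    qed
    then show ?thesis unfolding region_def Mn_def[symmetric] s_def[symmetric] by auto
  qed
  have pb1: "\<pi> $ b1 > 0" and pb2: "\<pi> $ b2 > 0" using pi(2) by auto
  have wM: "weight M F \<alpha> \<pi> \<nu>M = 1/2" and wm: "weight M F \<alpha> \<pi> \<nu>m = 1/2"
    unfolding weight_def regM regm using gauss_half_tangent[OF G pi(1) U ne pb1 pb2] by auto
  have wO: "weight M F \<alpha> \<pi> \<nu> = 0" if "\<nu> \<in> Mn" "\<nu> \<noteq> \<nu>M" "\<nu> \<noteq> \<nu>m" for \<nu>
    unfolding weight_def regO[OF that] by simp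
  have S: "{\<nu> \<in> minimizers F \<alpha> \<pi>. weight M F \<alpha> \<pi> \<nu> > 0} = {\<nu>M, \<nu>m}"
    using wM wm wO \<nu>M \<nu>m unfolding Mn_def by force
  show ?thesis unfolding S using Mm wM wm by auto
qed

end
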